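(* Let $w(x,y)=x^{a_1}y^{b_1}\cdots x^{a_k}y^{b_k}\in F_2$ with all integers $a_i\neq0$, $b_i\neq 0$, and put $A=\sum_{i=1}^k a_i$, $B=\sum_{i=1}^k b_i$, $A_i=\sum_{j\le i}a_j$, $B_i=\sum_{j<i}b_j$. If $A\neq 0$ and the word map $w:\mathrm{SL}(2,\mathbb{C})^2\to \mathrm{SL}(2,\mathbb{C})$ is not surjective, then $\sum_{i=1}^k b_i\gamma^{2A_i}=0$ for every root $\gamma$ of $z^A+1=0$. If $B\neq 0$ and the word map $w$ is not surjective, then $\sum_{i=1}^k a_i\delta^{2B_i}=0$ for every root $\delta$ of $z^B+1=0$.
   Context: The word map sends $(X,Y)\in\mathrm{SL}(2,\mathbb{C})^2$ to $X^{a_1}Y^{b_1}\cdots X^{a_k}Y^{b_k}$. *)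

theory Defs
  imports "HOL-Analysis.Analysis"
begin

definition SL2 :: "(complex^2^2) set" where
  "SL2 = {M. det M = 1}"

fun mpow_nat :: "complex^2^2 \<Rightarrow> nat \<Rightarrow> complex^2^2" where
  "mpow_nat M 0 = mat 1"
| "mpow_nat M (Suc n) = M ** mpow_nat M n"

definition mpow_int :: "complex^2^2 \<Rightarrow> int \<Rightarrow> complex^2^2" where
  "mpow_int M n = (if 0 \<le> n then mpow_nat M (nat n) else mpow_nat (matrix_inv M) (nat (- n)))"

definition word_map :: "(nat \<Rightarrow> int) \<Rightarrow> (nat \<Rightarrow> int) \<Rightarrow> nat \<Rightarrow> complex^2^2 \<Rightarrow> complex^2^2 \<Rightarrow> complex^2^2" where
  "word_map a b k X Y = foldr (\<lambda>i M. mpow_int X (a i) ** mpow_int Y (b i) ** M) [1..<k+1] (mat 1)"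

definition word_map_surjective :: "(nat \<Rightarrow> int) \<Rightarrow> (nat \<Rightarrow> int) \<Rightarrow> nat \<Rightarrow> bool" where
  "word_map_surjective a b k \<longleftrightarrow> (\<forall>Z\<in>SL2. \<exists>X\<in>SL2. \<exists>Y\<in>SL2. word_map a b k X Y = Z)"

end

theory Submission imports Defs begin

definition m2 :: "complex \<Rightarrow> complex \<Rightarrow> complex \<Rightarrow> complex \<Rightarrow> complex^2^2" where
  "m2 a b c d = (\<chi> i j. if i = 1 then (if j = 1 then a else b) else (if j = 1 then c else d))"

lemma two_ne_one[simp]: "(2::2) \<noteq> 1" by simp

lemma m2_nth[simp]: "m2 a b c d $ 1 $ 1 = a" "m2 a b c d $ 1 $ 2 = b"
  "m2 a b c d $ 2 $ 1 = c" "m2 a b c d $ 2 $ 2 = d"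
  by (simp_all add: m2_def)

lemma m2_expand: "Z = m2 (Z$1$1) (Z$1$2) (Z$2$1) (Z$2$2)"
  unfolding vec_eq_iff m2_def by (auto simp: forall_2)

lemma m2_eq_iff: "m2 a b c d = m2 a' b' c' d' \<longleftrightarrow> a = a' \<and> b = b' \<and> c = c' \<and> d = d'"
  by (metis m2_nth)

lemma m2_mult: "m2 a b c d ** m2 a' b' c' d' = m2 (a*a' + b*c') (a*b' + b*d') (c*a'+d*c') (c*b'+d*d')"
  by (subst m2_expand[of "m2 a b c d ** _"]) (simp add: matrix_matrix_mult_def sum_2)

lemma mat1_m2: "mat 1 = m2 1 0 0 1"
  by (subst m2_expand[of "mat 1"]) (simp add: mat_def)

lemma det_m2: "det (m2 a b c d) = a*d - b*c"
  by (simp add: det_2)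

lemma matrix_inv_eq:
  fixes M N :: "complex^2^2"
  assumes "M ** N = mat 1" "N ** M = mat 1"
  shows "matrix_inv M = N"
proof -
  let ?C = "matrix_inv M"
  have "M ** ?C = mat 1 \<and> ?C ** M = mat 1"
    unfolding matrix_inv_def by (rule someI[of _ N]) (use assms in simp)
  then have "?C = ?C ** (M ** N)" and "?C ** M = mat 1" by (simp_all add: assms)
  then show ?thesis by (metis matrix_mul_assoc matrix_mul_lid)
qed

lemma mpow_nat_conj:
  assumes "Q ** P = mat 1" "P ** Q = mat 1"
  shows "mpow_nat (P ** X ** Q) n = P ** mpow_nat X n ** Q"
proof (induction n)
  case 0 then show ?case
    by (metis (no_types) assms(2) matrix_mul_rid mpow_nat.simps(1))
next
  case (Suc n)
  have "P ** X ** Q ** (P ** mpow_nat X n ** Q) = P ** X ** (Q ** P) ** mpow_nat X n ** Q"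
    by (simp add: matrix_mul_assoc)
  then show ?case using Suc assms by (simp add: matrix_mul_assoc)
qed

lemma mpow_int_conj:
  fixes X Xi P Q :: "complex^2^2"
  assumes "Q ** P = mat 1" "P ** Q = mat 1" "X ** Xi = mat 1" "Xi ** X = mat 1"
  shows "mpow_int (P ** X ** Q) n = P ** mpow_int X n ** Q"
proof -
  have "matrix_inv (P ** X ** Q) = P ** Xi ** Q"
  proof (rule matrix_inv_eq)
    have "P ** X ** Q ** (P ** Xi ** Q) = P ** (X ** ((Q ** P) ** Xi)) ** Q"
      by (simp add: matrix_mul_assoc)
    also have "\<dots> = mat 1" using assms by simp
    finally show "P ** X ** Q ** (P ** Xi ** Q) = mat 1" .
    have "P ** Xi ** Q ** (P ** X ** Q) = P ** (Xi ** ((Q ** P) ** X)) ** Q"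
      by (simp add: matrix_mul_assoc)
    also have "\<dots> = mat 1" using assms by simp
    finally show "P ** Xi ** Q ** (P ** X ** Q) = mat 1" .
  qed
  moreover have "matrix_inv X = Xi" using assms matrix_inv_eq by blast
  ultimately show ?thesis using assms(1,2)
    by (simp add: mpow_int_def mpow_nat_conj)
qed

lemma foldr_mult:
  "foldr (\<lambda>i M. F i ** M) xs N = foldr (\<lambda>i M. F i ** M) xs (mat 1) ** (N::complex^2^2)"
  by (induction xs) (simp_all add: matrix_mul_assoc)

lemma word_map_0: "word_map a b 0 X Y = mat 1"
  by (simp add: word_map_def)

lemma word_map_Suc:
  "word_map a b (Suc k) X Y = word_map a b k X Y ** (mpow_int X (a (Suc k)) ** mpow_int Y (b (Suc k)))"
proof -
  have e: "[1..<Suc k + 1] = [1..<k+1] @ [Suc k]" by simp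
  have f: "foldr (\<lambda>i M. F i ** M) (xs @ [y]) (mat 1) = foldr (\<lambda>i M. F i ** M) xs (mat 1) ** F y"
    for F :: "nat \<Rightarrow> complex^2^2" and xs y
    using foldr_mult[of F xs "F y ** mat 1"] by simp
  show ?thesis unfolding word_map_def e by (rule f)
qed

lemma word_map_conj:
  fixes X Xi Y Yi P Q :: "complex^2^2"
  assumes "Q ** P = mat 1" "P ** Q = mat 1" "X ** Xi = mat 1" "Xi ** X = mat 1"
     "Y ** Yi = mat 1" "Yi ** Y = mat 1"
  shows "word_map a b k (P ** X ** Q) (P ** Y ** Q) = P ** word_map a b k X Y ** Q"
proof (induction k)
  case 0 then show ?case by (metis assms(2) matrix_mul_rid word_map_0)
next
  case (Suc k)
  have "P ** word_map a b k X Y ** Q ** (P ** mpow_int X (a (Suc k)) ** Q ** (P ** mpow_int Y (b (Suc k)) ** Q))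
     = P ** word_map a b k X Y ** (Q ** P) ** mpow_int X (a (Suc k)) ** (Q ** P) ** mpow_int Y (b (Suc k)) ** Q"
    by (simp add: matrix_mul_assoc)
  then show ?case using Suc assms
    by (simp add: word_map_Suc mpow_int_conj[OF assms(1,2)] matrix_mul_assoc)
qed

lemma mpow_nat_diag: "mpow_nat (m2 t 0 0 u) n = m2 (t^n) 0 0 (u^n)"
  by (induction n) (simp_all add: mat1_m2 m2_mult)

lemma mpow_nat_uni: "mpow_nat (m2 1 s 0 1) n = m2 1 (of_nat n * s) 0 1"
  by (induction n) (simp_all add: mat1_m2 m2_mult algebra_simps)

lemma inv_diag: "t \<noteq> 0 \<Longrightarrow> matrix_inv (m2 t 0 0 (inverse t)) = m2 (inverse t) 0 0 t"
  by (rule matrix_inv_eq) (simp_all add: mat1_m2 m2_mult)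

lemma inv_uni: "matrix_inv (m2 1 s 0 1) = m2 1 (-s) 0 1"
  by (rule matrix_inv_eq) (simp_all add: mat1_m2 m2_mult)

lemma mpow_int_diag: "t \<noteq> 0 \<Longrightarrow> mpow_int (m2 t 0 0 (inverse t)) n = m2 (t powi n) 0 0 (t powi (-n))"
  by (auto simp: mpow_int_def inv_diag mpow_nat_diag power_int_def power_inverse)

lemma mpow_int_uni: "mpow_int (m2 1 s 0 1) n = m2 1 (of_int n * s) 0 1"
  by (auto simp: mpow_int_def inv_uni mpow_nat_uni)

lemma word_A:
  fixes t s :: complex
  assumes "t \<noteq> 0"
  shows "word_map a b k (m2 t 0 0 (inverse t)) (m2 1 s 0 1) =
    m2 (t powi (\<Sum>j=1..k. a j)) (s * t powi (-(\<Sum>j=1..k. a j)) * (\<Sum>i=1..k. of_int (b i) * t powi (2 * (\<Sum>j=1..i. a j)))) 0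
       (t powi (-(\<Sum>j=1..k. a j)))"
proof (induction k)
  case 0 then show ?case by (simp add: word_map_0 mat1_m2)
next
  case (Suc k)
  define A where "A = (\<Sum>j=1..k. a j)"
  define S where "S = (\<Sum>i=1..k. of_int (b i) * t powi (2 * (\<Sum>j=1..i. a j)))"
  define x where "x = t powi A"
  define y where "y = t powi (a (Suc k))"
  have x0: "x \<noteq> 0" and y0: "y \<noteq> 0" using assms by (simp_all add: x_def y_def)
  have e1: "t powi (A + a (Suc k)) = x * y" using assms by (simp add: x_def y_def power_int_add)
  have e2: "t powi (- (A + a (Suc k))) = inverse x * inverse y"
    unfolding power_int_minus e1 by (simp add: inverse_mult_distrib)
  have e3: "t powi (2 * (A + a (Suc k))) = (x*y)^2"
    by (metis e1 mult.commute power_int_mult power_int_of_nat of_nat_numeral)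
  have IH: "word_map a b k (m2 t 0 0 (inverse t)) (m2 1 s 0 1) = m2 x (s * inverse x * S) 0 (inverse x)"
    using Suc by (simp add: A_def S_def x_def power_int_minus)
  have F: "mpow_int (m2 t 0 0 (inverse t)) (a (Suc k)) ** mpow_int (m2 1 s 0 1) (b (Suc k))
     = m2 y (y * of_int (b (Suc k)) * s) 0 (inverse y)"
    using assms by (simp add: mpow_int_diag mpow_int_uni m2_mult y_def power_int_minus mult.assoc)
  have Aeq: "(\<Sum>j=1..Suc k. a j) = A + a (Suc k)" by (simp add: A_def)
  have Seq: "(\<Sum>i=1..Suc k. of_int (b i) * t powi (2 * (\<Sum>j=1..i. a j))) = S + of_int (b (Suc k)) * (x*y)^2"
  proof -
    have h: "t powi (2 * sum a {Suc 0..k} + 2 * a (Suc k)) = (x*y)^2"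
      using e3 by (simp add: A_def distrib_left)
    show ?thesis by (simp add: S_def h)
  qed
  show ?case
    unfolding word_map_Suc IH F Aeq Seq e1 e2 m2_mult
    using x0 y0 by (simp add: m2_eq_iff field_simps power2_eq_square)
qed

lemma word_B:
  fixes t s :: complex
  assumes "t \<noteq> 0"
  shows "word_map a b k (m2 1 s 0 1) (m2 t 0 0 (inverse t)) =
    m2 (t powi (\<Sum>j=1..k. b j)) (s * t powi (-(\<Sum>j=1..k. b j)) * (\<Sum>i=1..k. of_int (a i) * t powi (2 * (\<Sum>j=1..<i. b j)))) 0
       (t powi (-(\<Sum>j=1..k. b j)))"
proof (induction k)
  case 0 then show ?case by (simp add: word_map_0 mat1_m2)
next
  case (Suc k)
  define B where "B = (\<Sum>j=1..k. b j)"
  define S where "S = (\<Sum>i=1..k. of_int (a i) * t powi (2 * (\<Sum>j=1..<i. b j)))"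
  define x where "x = t powi B"
  define y where "y = t powi (b (Suc k))"
  have x0: "x \<noteq> 0" and y0: "y \<noteq> 0" using assms by (simp_all add: x_def y_def)
  have e1: "t powi (B + b (Suc k)) = x * y" using assms by (simp add: x_def y_def power_int_add)
  have e2: "t powi (- (B + b (Suc k))) = inverse x * inverse y"
    unfolding power_int_minus e1 by (simp add: inverse_mult_distrib)
  have bb: "(\<Sum>j=1..<Suc k. b j) = B" unfolding B_def by (rule sum.cong) auto
  have e3: "t powi (2 * B) = x^2"
    by (metis x_def mult.commute power_int_mult power_int_of_nat of_nat_numeral)
  have IH: "word_map a b k (m2 1 s 0 1) (m2 t 0 0 (inverse t)) = m2 x (s * inverse x * S) 0 (inverse x)"
    using Suc by (simp add: B_def S_def x_def power_int_minus)
  have F: "mpow_int (m2 1 s 0 1) (a (Suc k)) ** mpow_int (m2 t 0 0 (inverse t)) (b (Suc k))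
     = m2 y (of_int (a (Suc k)) * s * inverse y) 0 (inverse y)"
    using assms by (simp add: mpow_int_diag mpow_int_uni m2_mult y_def power_int_minus mult.assoc)
  have Beq: "(\<Sum>j=1..Suc k. b j) = B + b (Suc k)" by (simp add: B_def)
  have Seq: "(\<Sum>i=1..Suc k. of_int (a i) * t powi (2 * (\<Sum>j=1..<i. b j))) = S + of_int (a (Suc k)) * x^2"
    by (simp only: sum.cl_ivl_Suc S_def bb e3) simp
  show ?case
    unfolding word_map_Suc IH F Beq Seq e1 e2 m2_mult
    using x0 y0 by (simp add: m2_eq_iff field_simps power2_eq_square)
qed

lemma SL2_inv: "X \<in> SL2 \<Longrightarrow> \<exists>Xi. X ** Xi = mat 1 \<and> Xi ** X = mat 1"
  using invertible_det_nz[of X] unfolding SL2_def invertible_def by auto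

lemma img_conj:
  fixes P Q T :: "complex^2^2"
  assumes "X \<in> SL2" "Y \<in> SL2" "word_map a b k X Y = T" "P ** Q = mat 1" "Q ** P = mat 1"
  shows "\<exists>X'\<in>SL2. \<exists>Y'\<in>SL2. word_map a b k X' Y' = P ** T ** Q"
proof -
  obtain Xi where X: "X ** Xi = mat 1" "Xi ** X = mat 1" using SL2_inv assms(1) by blast
  obtain Yi where Y: "Y ** Yi = mat 1" "Yi ** Y = mat 1" using SL2_inv assms(2) by blast
  have dPQ: "det P * det Q = 1" using assms(4) by (metis det_I det_mul)
  have "det (P ** M ** Q) = det M" for M :: "complex^2^2"
    using dPQ by (simp add: det_mul)
  then have "P ** X ** Q \<in> SL2" "P ** Y ** Q \<in> SL2" using assms(1,2) by (auto simp: SL2_def)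
  moreover have "word_map a b k (P ** X ** Q) (P ** Y ** Q) = P ** T ** Q"
    using word_map_conj[OF assms(5,4) X Y] assms(3) by simp
  ultimately show ?thesis by blast
qed

lemma triang:
  assumes "Z \<in> SL2"
  shows "\<exists>P Q l c. P ** Q = mat 1 \<and> Q ** P = mat 1 \<and> l \<noteq> 0 \<and> Z = P ** m2 l c 0 (inverse l) ** Q"
proof -
  define a b c d where "a = Z$1$1" "b = Z$1$2" "c = Z$2$1" "d = Z$2$2"
  have Z: "Z = m2 a b c d" unfolding a_b_c_d_def by (rule m2_expand)
  have det: "a*d - b*c = 1" using assms Z by (simp add: SL2_def det_m2)
  show ?thesis
  proof (cases "c = 0")
    case True
    then have ad1: "a * d = 1" using det by simp
    then have "a \<noteq> 0" "d = inverse a" by (auto simp: inverse_unique)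
    then show ?thesis using Z True
      by (intro exI[of _ "mat 1"] exI[of _ a] exI[of _ b]) simp
  next
    case False
    define l where "l = ((a+d) + csqrt ((a+d)^2 - 4)) / 2"
    have q: "l^2 - (a+d)*l + 1 = 0"
    proof -
      have "2*l - (a+d) = csqrt ((a+d)^2 - 4)" unfolding l_def by (simp add: field_simps)
      then have "(2*l - (a+d))^2 = (a+d)^2 - 4" by simp
      then have "4 * (l^2 - (a+d)*l + 1) = 0" by (simp add: power2_eq_square algebra_simps)
      then show ?thesis by (simp only: mult_eq_0_iff) simp
    qed
    have l0: "l \<noteq> 0" using q by auto
    have ad: "a + d = l + inverse l" using q l0 by (simp add: field_simps power2_eq_square)
    define P where "P = m2 (l-d) 1 c 0"
    define Q where "Q = m2 0 (1/c) 1 ((d-l)/c)"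
    have PQ: "P ** Q = mat 1" "Q ** P = mat 1"
      using False by (simp_all add: P_def Q_def m2_mult mat1_m2 m2_eq_iff field_simps)
    have "Z ** P = P ** m2 l 1 0 (inverse l)"
      unfolding Z P_def m2_mult m2_eq_iff using q det ad l0
      by (auto simp: field_simps power2_eq_square)
    then have "Z = P ** m2 l 1 0 (inverse l) ** Q"
      by (metis PQ(1) matrix_mul_assoc matrix_mul_rid)
    then show ?thesis using PQ l0 by blast
  qed
qed

lemma surj_crit:
  assumes D: "\<And>l. l \<noteq> 0 \<Longrightarrow> \<exists>X\<in>SL2. \<exists>Y\<in>SL2. word_map a b k X Y = m2 l 0 0 (inverse l)"
    and U1: "\<And>c. \<exists>X\<in>SL2. \<exists>Y\<in>SL2. word_map a b k X Y = m2 1 c 0 1"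
    and U2: "\<And>c. \<exists>X\<in>SL2. \<exists>Y\<in>SL2. word_map a b k X Y = m2 (-1) c 0 (-1)"
  shows "word_map_surjective a b k"
  unfolding word_map_surjective_def
proof
  fix Z assume "Z \<in> SL2"
  then obtain P Q l c where PQ: "P ** Q = mat 1" "Q ** P = mat 1" and l0: "l \<noteq> 0"
    and Z: "Z = P ** m2 l c 0 (inverse l) ** Q" using triang by blast
  have T: "\<exists>X\<in>SL2. \<exists>Y\<in>SL2. word_map a b k X Y = m2 l c 0 (inverse l)"
  proof (cases "l = 1 \<or> l = -1")
    case True
    then show ?thesis using U1 U2 by auto
  next
    case False
    have ne: "inverse l - l \<noteq> 0"
    proof
      assume "inverse l - l = 0"
      then have "l * l = 1" using l0 by (simp add: field_simps)
      then have "(l - 1) * (l + 1) = 0" by (simp add: algebra_simps)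
      then show False using False by (simp add: add_eq_0_iff2)
    qed
    define u where "u = c / (inverse l - l)"
    obtain X Y where XY: "X \<in> SL2" "Y \<in> SL2" "word_map a b k X Y = m2 l 0 0 (inverse l)"
      using D[OF l0] by blast
    have R: "m2 1 u 0 1 ** m2 1 (-u) 0 1 = mat 1" "m2 1 (-u) 0 1 ** m2 1 u 0 1 = mat 1"
      by (simp_all add: m2_mult mat1_m2)
    have "m2 1 u 0 1 ** m2 l 0 0 (inverse l) ** m2 1 (-u) 0 1 = m2 l c 0 (inverse l)"
    proof -
      have "u * (inverse l - l) = c" using ne by (simp add: u_def)
      then have "l * (-u) + u * inverse l = c" by (simp add: algebra_simps)
      then show ?thesis by (simp add: m2_mult m2_eq_iff)
    qed
    then show ?thesis using img_conj[OF XY R] by simp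
  qed
  then show "\<exists>X\<in>SL2. \<exists>Y\<in>SL2. word_map a b k X Y = Z"
    using img_conj[OF _ _ _ PQ] Z by blast
qed

lemma diag_SL2: "t \<noteq> 0 \<Longrightarrow> m2 t 0 0 (inverse t) \<in> SL2"
  by (simp add: SL2_def det_m2)

lemma uni_SL2: "m2 1 s 0 1 \<in> SL2"
  by (simp add: SL2_def det_m2)

lemma root_ex: "(n::int) \<noteq> 0 \<Longrightarrow> (l::complex) \<noteq> 0 \<Longrightarrow> \<exists>t. t \<noteq> 0 \<and> t powi n = l"
  by (intro exI[of _ "exp (Ln l / of_int n)"]) (simp add: exp_power_int)

theorem lemma7p2:
  fixes a b :: "nat \<Rightarrow> int" and k :: nat
  assumes "\<forall>i\<in>{1..k}. a i \<noteq> 0"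
    and "\<forall>i\<in>{1..k}. b i \<noteq> 0"
  shows "((\<Sum>i=1..k. a i) \<noteq> 0 \<and> \<not> word_map_surjective a b k \<longrightarrow>
           (\<forall>\<gamma>::complex. \<gamma> powi (\<Sum>i=1..k. a i) + 1 = 0 \<longrightarrow>
              (\<Sum>i=1..k. of_int (b i) * \<gamma> powi (2 * (\<Sum>j=1..i. a j))) = 0))
       \<and> ((\<Sum>i=1..k. b i) \<noteq> 0 \<and> \<not> word_map_surjective a b k \<longrightarrow>
           (\<forall>\<delta>::complex. \<delta> powi (\<Sum>i=1..k. b i) + 1 = 0 \<longrightarrow>
              (\<Sum>i=1..k. of_int (a i) * \<delta> powi (2 * (\<Sum>j=1..<i. b j))) = 0))"
proof (intro conjI impI allI; elim conjE)
  fix g :: complex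
  define A where "A = (\<Sum>i=1..k. a i)"
  define S where "S = (\<Sum>i=1..k. of_int (b i) * g powi (2 * (\<Sum>j=1..i. a j)))"
  assume A0: "(\<Sum>i=1..k. a i) \<noteq> 0" and ns: "\<not> word_map_surjective a b k"
    and g: "g powi (\<Sum>i=1..k. a i) + 1 = 0"
  have A0': "A \<noteq> 0" using A0 by (simp add: A_def)
  have gA: "g powi A = -1" using g by (simp add: A_def eq_neg_iff_add_eq_0)
  have g0: "g \<noteq> 0" using gA A0' by auto
  show "S = 0" unfolding S_def[symmetric]
  proof (rule ccontr)
    assume S0: "S \<noteq> 0"
    have "word_map_surjective a b k"
    proof (rule surj_crit)
      fix l :: complex assume l0: "l \<noteq> 0"
      obtain t where t: "t \<noteq> 0" "t powi A = l" using root_ex[OF A0' l0] by blast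
      have "word_map a b k (m2 t 0 0 (inverse t)) (m2 1 0 0 1) = m2 l 0 0 (inverse l)"
        using word_A[OF t(1), of a b k 0, unfolded A_def[symmetric]] t by (simp add: power_int_minus)
      then show "\<exists>X\<in>SL2. \<exists>Y\<in>SL2. word_map a b k X Y = m2 l 0 0 (inverse l)"
        using diag_SL2[OF t(1)] uni_SL2 by blast
    next
      fix c :: complex
      have "word_map a b k (m2 1 (c / of_int A) 0 1) (m2 1 0 0 (inverse 1)) = m2 1 c 0 1"
      proof -
        have hA: "(\<Sum>i=1..k. of_int (a i) * (1::complex) powi (2 * (\<Sum>j=1..<i. b j))) = of_int A"
          by (simp add: A_def)
        show ?thesis
          using word_B[of 1 a b k "c / of_int A", unfolded hA] A0' by simp
      qed
      then show "\<exists>X\<in>SL2. \<exists>Y\<in>SL2. word_map a b k X Y = m2 1 c 0 1"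
        using diag_SL2[OF one_neq_zero] uni_SL2 by blast
    next
      fix c :: complex
      have "word_map a b k (m2 g 0 0 (inverse g)) (m2 1 (- c / S) 0 1) = m2 (-1) c 0 (-1)"
        using word_A[OF g0, of a b k "- c / S", unfolded A_def[symmetric] S_def[symmetric]] S0 gA
        by (simp add: power_int_minus)
      then show "\<exists>X\<in>SL2. \<exists>Y\<in>SL2. word_map a b k X Y = m2 (-1) c 0 (-1)"
        using diag_SL2[OF g0] uni_SL2 by blast
    qed
    then show False using ns by simp
  qed
next
  fix g :: complex
  define B where "B = (\<Sum>i=1..k. b i)"
  define S where "S = (\<Sum>i=1..k. of_int (a i) * g powi (2 * (\<Sum>j=1..<i. b j)))"
  assume B0: "(\<Sum>i=1..k. b i) \<noteq> 0" and ns: "\<not> word_map_surjective a b k"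
    and g: "g powi (\<Sum>i=1..k. b i) + 1 = 0"
  have B0': "B \<noteq> 0" using B0 by (simp add: B_def)
  have gB: "g powi B = -1" using g by (simp add: B_def eq_neg_iff_add_eq_0)
  have g0: "g \<noteq> 0" using gB B0' by auto
  show "S = 0" unfolding S_def[symmetric]
  proof (rule ccontr)
    assume S0: "S \<noteq> 0"
    have "word_map_surjective a b k"
    proof (rule surj_crit)
      fix l :: complex assume l0: "l \<noteq> 0"
      obtain t where t: "t \<noteq> 0" "t powi B = l" using root_ex[OF B0' l0] by blast
      have "word_map a b k (m2 1 0 0 1) (m2 t 0 0 (inverse t)) = m2 l 0 0 (inverse l)"
        using word_B[OF t(1), of a b k 0, unfolded B_def[symmetric]] t by (simp add: power_int_minus)
      then show "\<exists>X\<in>SL2. \<exists>Y\<in>SL2. word_map a b k X Y = m2 l 0 0 (inverse l)"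
        using diag_SL2[OF t(1)] uni_SL2 by blast
    next
      fix c :: complex
      have "word_map a b k (m2 1 0 0 (inverse 1)) (m2 1 (c / of_int B) 0 1) = m2 1 c 0 1"
      proof -
        have hB: "(\<Sum>i=1..k. of_int (b i) * (1::complex) powi (2 * (\<Sum>j=1..i. a j))) = of_int B"
          by (simp add: B_def)
        show ?thesis
          using word_A[of 1 a b k "c / of_int B", unfolded hB] B0' by simp
      qed
      then show "\<exists>X\<in>SL2. \<exists>Y\<in>SL2. word_map a b k X Y = m2 1 c 0 1"
        using diag_SL2[OF one_neq_zero] uni_SL2 by blast
    next
      fix c :: complex
      have "word_map a b k (m2 1 (- c / S) 0 1) (m2 g 0 0 (inverse g)) = m2 (-1) c 0 (-1)"
        using word_B[OF g0, of a b k "- c / S", unfolded B_def[symmetric] S_def[symmetric]] S0 gB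
        by (simp add: power_int_minus)
      then show "\<exists>X\<in>SL2. \<exists>Y\<in>SL2. word_map a b k X Y = m2 (-1) c 0 (-1)"
        using diag_SL2[OF g0] uni_SL2 by blast
    qed
    then show False using ns by simp
  qed
qed

end
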